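(* Let $X$ be a non-empty set, $\alpha$ an equivalence relation on $X$, and $f,g\in\mathcal T_X(\alpha)$. Then in the semigroup $\mathcal T_X(\alpha)$: (i) $f\,\mathscr L\,g$ iff $\operatorname{im}(f)=\operatorname{im}(g)$; (ii) $f\,\mathscr R\,g$ iff $f=g$, or $\ker(f)=\ker(g)$ and $\alpha$ separates both $\operatorname{im}(f)$ and $\operatorname{im}(g)$; (iii) $f\,\mathscr H\,g$ iff $f=g$, or $\ker(f)=\ker(g)$ and $\alpha$ separates $\operatorname{im}(f)=\operatorname{im}(g)$; (iv) $f\,\mathscr D\,g$ iff $\operatorname{im}(f)=\operatorname{im}(g)$, or $\operatorname{rank}(f)=\operatorname{rank}(g)$ and $\alpha$ separates both $\operatorname{im}(f)$ and $\operatorname{im}(g)$; (v) $f\,\mathscr J\,g$ iff $\operatorname{im}(f)=\operatorname{im}(g)$ or $\|\alpha f^{-1}\|=\operatorname{rank}(f)=\operatorname{rank}(g)=\|\alpha g^{-1}\|$. Further, $\mathscr D=\mathscr J$ in $\mathcal T_X(\alpha)$ if and only if $\|\alpha\|$ is finite or $\alpha=\Delta$.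
   Context: $\mathcal T_X$ is the semigroup of all maps $X\to X$ (written on the right, composed left to right). $\mathcal T_X(\alpha)=\{f\in\mathcal T_X:\ker(f)\supseteq\alpha\}$, where $\ker(f)=\{(x,y):xf=yf\}$. $\operatorname{rank}(f)=|\operatorname{im}(f)|$. $\|\sigma\|$ denotes the number of classes of an equivalence $\sigma$; $\alpha f^{-1}=\{(x,y):(xf,yf)\in\alpha\}$; $\Delta=\{(x,x):x\in X\}$. An equivalence $\sigma$ separates a set $B$ if each $\sigma$-class contains at most one element of $B$. Green's relations are computed within $\mathcal T_X(\alpha)$. *)

theory Defs
  imports Main "HOL-Library.FuncSet" "HOL-Library.Equipollence"
begin

text \<open>Maps X to X are represented as extensional functions (undefined outside X).
  Composition is written on the right: x (f g) = (x f) g.\<close>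

definition tmult :: "'a set \<Rightarrow> ('a \<Rightarrow> 'a) \<Rightarrow> ('a \<Rightarrow> 'a) \<Rightarrow> ('a \<Rightarrow> 'a)" where
  "tmult X f g = compose X g f"

definition kernel :: "'a set \<Rightarrow> ('a \<Rightarrow> 'b) \<Rightarrow> ('a \<times> 'a) set" where
  "kernel X f = {(x, y). x \<in> X \<and> y \<in> X \<and> f x = f y}"

definition TXalpha :: "'a set \<Rightarrow> ('a \<times> 'a) set \<Rightarrow> ('a \<Rightarrow> 'a) set" where
  "TXalpha X \<alpha> = {f \<in> X \<rightarrow>\<^sub>E X. \<alpha> \<subseteq> kernel X f}"

definition preimage_rel :: "'a set \<Rightarrow> ('a \<times> 'a) set \<Rightarrow> ('a \<Rightarrow> 'a) \<Rightarrow> ('a \<times> 'a) set" where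
  "preimage_rel X \<alpha> f = {(x, y). x \<in> X \<and> y \<in> X \<and> (f x, f y) \<in> \<alpha>}"

definition separates :: "('a \<times> 'a) set \<Rightarrow> 'a set \<Rightarrow> bool" where
  "separates \<sigma> B \<longleftrightarrow> (\<forall>x\<in>B. \<forall>y\<in>B. (x, y) \<in> \<sigma> \<longrightarrow> x = y)"

text \<open>Green's relations in a semigroup S with multiplication m (via S^1).\<close>

definition greenL :: "'s set \<Rightarrow> ('s \<Rightarrow> 's \<Rightarrow> 's) \<Rightarrow> 's \<Rightarrow> 's \<Rightarrow> bool" where
  "greenL S m f g \<longleftrightarrow> f \<in> S \<and> g \<in> S \<and>
     (f = g \<or> (\<exists>s\<in>S. f = m s g)) \<and> (g = f \<or> (\<exists>t\<in>S. g = m t f))"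

definition greenR :: "'s set \<Rightarrow> ('s \<Rightarrow> 's \<Rightarrow> 's) \<Rightarrow> 's \<Rightarrow> 's \<Rightarrow> bool" where
  "greenR S m f g \<longleftrightarrow> f \<in> S \<and> g \<in> S \<and>
     (f = g \<or> (\<exists>s\<in>S. f = m g s)) \<and> (g = f \<or> (\<exists>t\<in>S. g = m f t))"

definition greenH :: "'s set \<Rightarrow> ('s \<Rightarrow> 's \<Rightarrow> 's) \<Rightarrow> 's \<Rightarrow> 's \<Rightarrow> bool" where
  "greenH S m f g \<longleftrightarrow> greenL S m f g \<and> greenR S m f g"

definition greenD :: "'s set \<Rightarrow> ('s \<Rightarrow> 's \<Rightarrow> 's) \<Rightarrow> 's \<Rightarrow> 's \<Rightarrow> bool" where
  "greenD S m f g \<longleftrightarrow> (\<exists>h\<in>S. greenL S m f h \<and> greenR S m h g)"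

definition in_ideal :: "'s set \<Rightarrow> ('s \<Rightarrow> 's \<Rightarrow> 's) \<Rightarrow> 's \<Rightarrow> 's \<Rightarrow> bool" where
  "in_ideal S m f g \<longleftrightarrow> f = g \<or> (\<exists>a\<in>S. f = m a g) \<or> (\<exists>b\<in>S. f = m g b)
     \<or> (\<exists>a\<in>S. \<exists>b\<in>S. f = m (m a g) b)"

definition greenJ :: "'s set \<Rightarrow> ('s \<Rightarrow> 's \<Rightarrow> 's) \<Rightarrow> 's \<Rightarrow> 's \<Rightarrow> bool" where
  "greenJ S m f g \<longleftrightarrow> f \<in> S \<and> g \<in> S \<and> in_ideal S m f g \<and> in_ideal S m g f"

end

theory Submission
  imports Defs
begin


lemma coarser_lepoll:
  assumes "\<And>x y. x \<in> X \<Longrightarrow> y \<in> X \<Longrightarrow> q x = q y \<Longrightarrow> p x = p y"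
  shows "p ` X \<lesssim> q ` X"
proof -
  let ?h = "\<lambda>z. p (SOME x. x \<in> X \<and> q x = z)"
  have "p ` X \<subseteq> ?h ` (q ` X)"
  proof
    fix z assume "z \<in> p ` X"
    then obtain x where x: "x \<in> X" "z = p x" by auto
    have "\<exists>x'. x' \<in> X \<and> q x' = q x" using x by auto
    then have "(SOME x'. x' \<in> X \<and> q x' = q x) \<in> X \<and> q (SOME x'. x' \<in> X \<and> q x' = q x) = q x"
      by (rule someI_ex)
    then have "?h (q x) = p x" using assms x by metis
    then show "z \<in> ?h ` (q ` X)" using x by force
  qed
  then show ?thesis by (rule subset_image_lepoll)
qed

lemma same_kernel_eqpoll:
  assumes "\<And>x y. x \<in> X \<Longrightarrow> y \<in> X \<Longrightarrow> p x = p y \<longleftrightarrow> q x = q y"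
  shows "p ` X \<approx> q ` X"
  by (meson assms coarser_lepoll lepoll_antisym)




locale tx =
  fixes X :: "'a set" and \<alpha> :: "('a \<times> 'a) set"
  assumes ne: "X \<noteq> {}" and eq: "equiv X \<alpha>"
begin

abbreviation "T \<equiv> TXalpha X \<alpha>"
abbreviation "m \<equiv> tmult X"

lemma alpha_sub: "(x,y) \<in> \<alpha> \<Longrightarrow> x \<in> X \<and> y \<in> X"
  using eq by (auto simp: equiv_def refl_on_def)

lemma alpha_refl: "x \<in> X \<Longrightarrow> (x,x) \<in> \<alpha>"
  using eq by (auto simp: equiv_def refl_on_def)

lemma alpha_sym: "(x,y) \<in> \<alpha> \<Longrightarrow> (y,x) \<in> \<alpha>"
  using eq by (auto simp: equiv_def sym_def)

lemma alpha_trans: "(x,y) \<in> \<alpha> \<Longrightarrow> (y,z) \<in> \<alpha> \<Longrightarrow> (x,z) \<in> \<alpha>"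
  using eq by (auto simp: equiv_def trans_def)

lemma memT: "f \<in> T \<longleftrightarrow> f \<in> X \<rightarrow>\<^sub>E X \<and> (\<forall>x y. (x,y) \<in> \<alpha> \<longrightarrow> f x = f y)"
  using alpha_sub by (auto simp: TXalpha_def kernel_def)

lemma TD: "f \<in> T \<Longrightarrow> (x,y) \<in> \<alpha> \<Longrightarrow> f x = f y"
  using memT by blast

lemma T_into: "f \<in> T \<Longrightarrow> x \<in> X \<Longrightarrow> f x \<in> X"
  using memT by auto

lemma T_img: "f \<in> T \<Longrightarrow> f ` X \<subseteq> X"
  using T_into by auto

lemma mult_app: "x \<in> X \<Longrightarrow> m f g x = g (f x)"
  by (simp add: tmult_def compose_def)

lemma mult_T: "f \<in> T \<Longrightarrow> g \<in> T \<Longrightarrow> m f g \<in> T"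
  unfolding memT using alpha_sub by (auto simp: tmult_def compose_def PiE_def extensional_def Pi_def)

lemma T_ext: "f \<in> T \<Longrightarrow> g \<in> T \<Longrightarrow> (\<And>x. x \<in> X \<Longrightarrow> f x = g x) \<Longrightarrow> f = g"
  unfolding memT by (metis PiE_ext)

lemma extend:
  assumes B: "B \<subseteq> X" and bB: "\<And>y. y \<in> B \<Longrightarrow> b y \<in> X"
    and comp: "\<And>y1 y2. y1 \<in> B \<Longrightarrow> y2 \<in> B \<Longrightarrow> (y1,y2) \<in> \<alpha> \<Longrightarrow> b y1 = b y2"
  shows "\<exists>s\<in>T. \<forall>y\<in>B. s y = b y"
proof -
  obtain x0 where x0: "x0 \<in> X" using ne by auto
  define s where "s = restrict (\<lambda>y. if \<exists>z\<in>B. (y,z) \<in> \<alpha> then b (SOME z. z \<in> B \<and> (y,z) \<in> \<alpha>) else x0) X"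
  have sel: "(SOME z. z \<in> B \<and> (y,z) \<in> \<alpha>) \<in> B \<and> (y, SOME z. z \<in> B \<and> (y,z) \<in> \<alpha>) \<in> \<alpha>"
    if "\<exists>z\<in>B. (y,z) \<in> \<alpha>" for y
    using that by (metis (mono_tags, lifting) someI_ex)
  have "s \<in> T"
    unfolding memT
  proof (intro conjI allI impI)
    show "s \<in> X \<rightarrow>\<^sub>E X" using sel bB x0 by (auto simp: s_def)
  next
    fix y1 y2 assume a: "(y1,y2) \<in> \<alpha>"
    have X: "y1 \<in> X" "y2 \<in> X" using alpha_sub a by auto
    have iff: "(\<exists>z\<in>B. (y1,z) \<in> \<alpha>) \<longleftrightarrow> (\<exists>z\<in>B. (y2,z) \<in> \<alpha>)"
      using a alpha_sym alpha_trans by blast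
    show "s y1 = s y2"
    proof (cases "\<exists>z\<in>B. (y1,z) \<in> \<alpha>")
      case True
      then have T2: "\<exists>z\<in>B. (y2,z) \<in> \<alpha>" using iff by blast
      from sel[OF True] sel[OF T2] have
        "b (SOME z. z \<in> B \<and> (y1,z) \<in> \<alpha>) = b (SOME z. z \<in> B \<and> (y2,z) \<in> \<alpha>)"
        by (meson a alpha_sym alpha_trans comp)
      then show ?thesis using True T2 X by (simp add: s_def)
    next
      case False
      then show ?thesis using iff X by (simp add: s_def)
    qed
  qed
  moreover have "\<forall>y\<in>B. s y = b y"
  proof
    fix y assume y: "y \<in> B"
    then have ex: "\<exists>z\<in>B. (y,z) \<in> \<alpha>" using B alpha_refl by blast
    have "b (SOME z. z \<in> B \<and> (y,z) \<in> \<alpha>) = b y"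
      using sel[OF ex] y by (metis alpha_sym comp)
    then show "s y = b y" using ex y B by (auto simp: s_def)
  qed
  ultimately show ?thesis by blast
qed

lemma L_fact:
  assumes f: "f \<in> T" and g: "g \<in> T" and sub: "f ` X \<subseteq> g ` X"
  shows "\<exists>s\<in>T. f = m s g"
proof -
  define b where "b x = (SOME y. y \<in> X \<and> g y = f x)" for x
  have bx: "b x \<in> X \<and> g (b x) = f x" if "x \<in> X" for x
  proof -
    have "\<exists>y. y \<in> X \<and> g y = f x" using sub that by force
    then show ?thesis unfolding b_def by (rule someI_ex)
  qed
  have "\<exists>s\<in>T. \<forall>y\<in>X. s y = b y"
    by (rule extend) (auto simp: bx TD[OF f], simp add: b_def TD[OF f])
  then obtain s where s: "s \<in> T" "\<forall>y\<in>X. s y = b y" by blast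
  have "f = m s g"
    by (rule T_ext[OF f mult_T[OF s(1) g]]) (simp add: mult_app s bx)
  then show ?thesis using s by blast
qed

lemma R_fact:
  assumes f: "f \<in> T" and k: "k \<in> T"
    and c: "\<And>x y. x \<in> X \<Longrightarrow> y \<in> X \<Longrightarrow> (k x, k y) \<in> \<alpha> \<Longrightarrow> f x = f y"
  shows "\<exists>b\<in>T. f = m k b"
proof -
  define b where "b z = f (SOME x. x \<in> X \<and> k x = z)" for z
  have bx: "(SOME x'. x' \<in> X \<and> k x' = k x) \<in> X \<and> k (SOME x'. x' \<in> X \<and> k x' = k x) = k x"
    if "x \<in> X" for x
  proof -
    have "\<exists>y. y \<in> X \<and> k y = k x" using that by blast
    then show ?thesis by (rule someI_ex)
  qed
  have "\<exists>s\<in>T. \<forall>y\<in>k ` X. s y = b y"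
  proof (rule extend)
    show "k ` X \<subseteq> X" using T_img[OF k] .
    show "\<And>y. y \<in> k ` X \<Longrightarrow> b y \<in> X" using bx T_into[OF f] by (auto simp: b_def)
    fix y1 y2 assume "y1 \<in> k ` X" "y2 \<in> k ` X" "(y1,y2) \<in> \<alpha>"
    then obtain x1 x2 where "x1 \<in> X" "x2 \<in> X" "y1 = k x1" "y2 = k x2" "(k x1, k x2) \<in> \<alpha>" by auto
    then show "b y1 = b y2" unfolding b_def
      by (simp only:) (rule c, use bx in auto)
  qed
  then obtain s where s: "s \<in> T" "\<forall>y\<in>k ` X. s y = b y" by blast
  have "f = m k s"
  proof (rule T_ext[OF f mult_T[OF k s(1)]])
    fix x assume x: "x \<in> X"
    have "b (k x) = f x" unfolding b_def
      by (rule c) (use bx[OF x] x alpha_refl T_into[OF k x] in auto)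
    then show "f x = m k s x" using x s by (simp add: mult_app)
  qed
  then show ?thesis using s by blast
qed

end


context tx begin

lemma img_mult: "x \<in> X \<Longrightarrow> s \<in> T \<Longrightarrow> m s g x \<in> g ` X"
  by (simp add: mult_app T_into)

lemma L_iff:
  assumes f: "f \<in> T" and g: "g \<in> T"
  shows "greenL T m f g \<longleftrightarrow> f ` X = g ` X"
proof
  assume "greenL T m f g"
  then have 1: "f = g \<or> (\<exists>s\<in>T. f = m s g)" and 2: "g = f \<or> (\<exists>t\<in>T. g = m t f)"
    by (auto simp: greenL_def)
  from 1 have "f ` X \<subseteq> g ` X" using img_mult by blast
  moreover from 2 have "g ` X \<subseteq> f ` X" using img_mult by blast
  ultimately show "f ` X = g ` X" by blast
next
  assume "f ` X = g ` X"
  then show "greenL T m f g" using L_fact f g by (auto simp: greenL_def)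
qed

lemma R_iff:
  assumes f: "f \<in> T" and g: "g \<in> T"
  shows "greenR T m f g \<longleftrightarrow>
    f = g \<or> (kernel X f = kernel X g \<and> separates \<alpha> (f ` X) \<and> separates \<alpha> (g ` X))"
proof
  assume R: "greenR T m f g"
  show "f = g \<or> (kernel X f = kernel X g \<and> separates \<alpha> (f ` X) \<and> separates \<alpha> (g ` X))"
  proof (cases "f = g")
    case False
    with R obtain s t where s: "s \<in> T" "f = m g s" and t: "t \<in> T" "g = m f t"
      by (auto simp: greenR_def)
    have fs: "f x = s (g x)" if "x \<in> X" for x using s that by (simp add: mult_app)
    have gt: "g x = t (f x)" if "x \<in> X" for x using t that by (metis mult_app)
    have fg: "f x = f y \<longleftrightarrow> g x = g y" if "x \<in> X" "y \<in> X" for x y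
      using fs gt that by metis
    have "kernel X f = kernel X g" unfolding kernel_def using fg by auto
    moreover have "separates \<alpha> (g ` X)" unfolding separates_def
    proof (intro ballI impI)
      fix y1 y2 assume "y1 \<in> g ` X" "y2 \<in> g ` X" "(y1,y2) \<in> \<alpha>"
      then obtain x1 x2 where x: "x1 \<in> X" "x2 \<in> X" "y1 = g x1" "y2 = g x2" "(g x1, g x2) \<in> \<alpha>" by auto
      then have "f x1 = f x2" using fs TD[OF s(1)] by metis
      then show "y1 = y2" using x gt by metis
    qed
    moreover have "separates \<alpha> (f ` X)" unfolding separates_def
    proof (intro ballI impI)
      fix y1 y2 assume "y1 \<in> f ` X" "y2 \<in> f ` X" "(y1,y2) \<in> \<alpha>"
      then obtain x1 x2 where x: "x1 \<in> X" "x2 \<in> X" "y1 = f x1" "y2 = f x2" "(f x1, f x2) \<in> \<alpha>" by auto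
      then have "g x1 = g x2" using gt TD[OF t(1)] by metis
      then show "y1 = y2" using x fs by metis
    qed
    ultimately show ?thesis by blast
  qed simp
next
  assume H: "f = g \<or> (kernel X f = kernel X g \<and> separates \<alpha> (f ` X) \<and> separates \<alpha> (g ` X))"
  show "greenR T m f g"
  proof (cases "f = g")
    case False
    with H have k: "kernel X f = kernel X g" and sf: "separates \<alpha> (f ` X)" and sg: "separates \<alpha> (g ` X)"
      by auto
    have "\<exists>b\<in>T. f = m g b"
    proof (rule R_fact[OF f g])
      fix x y assume "x \<in> X" "y \<in> X" "(g x, g y) \<in> \<alpha>"
      then have "g x = g y" using sg by (auto simp: separates_def)
      then show "f x = f y" using k \<open>x \<in> X\<close> \<open>y \<in> X\<close> by (auto simp: kernel_def)
    qed
    moreover have "\<exists>b\<in>T. g = m f b"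
    proof (rule R_fact[OF g f])
      fix x y assume "x \<in> X" "y \<in> X" "(f x, f y) \<in> \<alpha>"
      then have "f x = f y" using sf by (auto simp: separates_def)
      then show "g x = g y" using k \<open>x \<in> X\<close> \<open>y \<in> X\<close> by (auto simp: kernel_def)
    qed
    ultimately show ?thesis using f g by (auto simp: greenR_def)
  qed (use f in \<open>auto simp: greenR_def\<close>)
qed

lemma H_iff:
  assumes f: "f \<in> T" and g: "g \<in> T"
  shows "greenH T m f g \<longleftrightarrow>
    f = g \<or> (kernel X f = kernel X g \<and> f ` X = g ` X \<and> separates \<alpha> (f ` X))"
  unfolding greenH_def L_iff[OF f g] R_iff[OF f g] by auto

end


context tx begin

lemma kernel_eq_D:
  assumes "kernel X h = kernel X g" "x \<in> X" "y \<in> X" shows "h x = h y \<longleftrightarrow> g x = g y"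
proof -
  have "(x,y) \<in> kernel X h \<longleftrightarrow> (x,y) \<in> kernel X g" using assms(1) by simp
  then show ?thesis using assms(2,3) by (simp add: kernel_def)
qed

lemma D_iff:
  assumes f: "f \<in> T" and g: "g \<in> T"
  shows "greenD T m f g \<longleftrightarrow>
    f ` X = g ` X \<or> (f ` X \<approx> g ` X \<and> separates \<alpha> (f ` X) \<and> separates \<alpha> (g ` X))"
proof
  assume "greenD T m f g"
  then obtain h where h: "h \<in> T" "greenL T m f h" "greenR T m h g" by (auto simp: greenD_def)
  have fh: "f ` X = h ` X" using L_iff[OF f h(1)] h(2) by simp
  from R_iff[OF h(1) g] h(3) have
    "h = g \<or> (kernel X h = kernel X g \<and> separates \<alpha> (h ` X) \<and> separates \<alpha> (g ` X))" by simp
  then show "f ` X = g ` X \<or> (f ` X \<approx> g ` X \<and> separates \<alpha> (f ` X) \<and> separates \<alpha> (g ` X))"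
  proof
    assume "h = g" then show ?thesis using fh by simp
  next
    assume a: "kernel X h = kernel X g \<and> separates \<alpha> (h ` X) \<and> separates \<alpha> (g ` X)"
    then have "h ` X \<approx> g ` X" by (intro same_kernel_eqpoll kernel_eq_D) auto
    then show ?thesis using a fh by simp
  qed
next
  assume "f ` X = g ` X \<or> (f ` X \<approx> g ` X \<and> separates \<alpha> (f ` X) \<and> separates \<alpha> (g ` X))"
  then show "greenD T m f g"
  proof
    assume "f ` X = g ` X"
    then have "greenL T m f g" using L_iff[OF f g] by simp
    moreover have "greenR T m g g" using g by (simp add: greenR_def)
    ultimately show ?thesis using g by (auto simp: greenD_def)
  next
    assume a: "f ` X \<approx> g ` X \<and> separates \<alpha> (f ` X) \<and> separates \<alpha> (g ` X)"
    then obtain \<phi> where \<phi>: "bij_betw \<phi> (f ` X) (g ` X)" by (auto simp: eqpoll_def)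
    define h where "h = restrict (\<lambda>x. inv_into (f ` X) \<phi> (g x)) X"
    have im\<phi>: "\<phi> ` (f ` X) = g ` X" and inj\<phi>: "inj_on \<phi> (f ` X)" using \<phi> by (auto simp: bij_betw_def)
    have hin: "h x \<in> f ` X" if "x \<in> X" for x
      using that im\<phi> by (auto simp: h_def intro!: inv_into_into)
    have hT: "h \<in> T" unfolding memT
    proof (intro conjI allI impI)
      show "h \<in> X \<rightarrow>\<^sub>E X" using hin T_img[OF f] by (auto simp: h_def)
      fix x y assume "(x,y) \<in> \<alpha>" then show "h x = h y"
        using alpha_sub TD[OF g] by (auto simp: h_def)
    qed
    have himg: "h ` X = f ` X"
    proof
      show "h ` X \<subseteq> f ` X" using hin by auto
      show "f ` X \<subseteq> h ` X"
      proof
        fix z assume z: "z \<in> f ` X"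
        then have "\<phi> z \<in> g ` X" using im\<phi> by blast
        then obtain x where x: "x \<in> X" "g x = \<phi> z" by auto
        have "h x = z" using x z inj\<phi> by (simp add: h_def inv_into_f_f)
        then show "z \<in> h ` X" using x by force
      qed
    qed
    have injinv: "inj_on (inv_into (f ` X) \<phi>) (g ` X)"
      using im\<phi> inj_on_inv_into by (metis order_refl)
    have "kernel X h = kernel X g" unfolding kernel_def
      using injinv by (auto simp: h_def inj_on_def)
    then have "greenR T m h g" using R_iff[OF hT g] a himg by simp
    moreover have "greenL T m f h" using L_iff[OF f hT] himg by simp
    ultimately show ?thesis using hT by (auto simp: greenD_def)
  qed
qed

end



definition clsof :: "('a \<times> 'a) set \<Rightarrow> 'a set \<Rightarrow> 'a set set" where
  "clsof r A = (\<lambda>a. r``{a}) ` A"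

lemma four_sets:
  assumes "Cf \<lesssim> F" "Cg \<lesssim> G"
    and "(F \<subseteq> G \<and> Cf \<subseteq> Cg) \<or> F \<lesssim> Cg"
    and "(G \<subseteq> F \<and> Cg \<subseteq> Cf) \<or> G \<lesssim> Cf"
    and "\<not> (F \<subseteq> G \<and> G \<subseteq> F)"
  shows "Cf \<approx> F \<and> F \<approx> G \<and> G \<approx> Cg"
proof -
  have sub: "A \<subseteq> B \<Longrightarrow> A \<lesssim> B" for A B :: "'x set" by (rule subset_imp_lepoll)
  from assms(3,4,5) consider
      "F \<subseteq> G" "Cf \<subseteq> Cg" "G \<lesssim> Cf" | "G \<subseteq> F" "Cg \<subseteq> Cf" "F \<lesssim> Cg" | "F \<lesssim> Cg" "G \<lesssim> Cf"
    by blast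
  then show ?thesis
  proof cases
    case 1
    have Fsub: "F \<lesssim> G" using sub[OF 1(1)] .
    have a: "G \<lesssim> F" by (rule lepoll_trans[OF 1(3) assms(1)])
    have b: "F \<lesssim> Cf" by (rule lepoll_trans[OF Fsub 1(3)])
    have "Cf \<approx> F" by (rule lepoll_antisym[OF assms(1) b])
    moreover have "F \<approx> G" by (rule lepoll_antisym[OF Fsub a])
    moreover have "G \<approx> Cg" by (rule lepoll_antisym[OF lepoll_trans[OF 1(3) sub[OF 1(2)]] assms(2)])
    ultimately show ?thesis by blast
  next
    case 2
    have Gsub: "G \<lesssim> F" using sub[OF 2(1)] .
    have a: "F \<lesssim> G" by (rule lepoll_trans[OF 2(3) assms(2)])
    have b: "G \<lesssim> Cg" by (rule lepoll_trans[OF Gsub 2(3)])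
    have "Cf \<approx> F" by (rule lepoll_antisym[OF assms(1) lepoll_trans[OF 2(3) sub[OF 2(2)]]])
    moreover have "F \<approx> G" by (rule lepoll_antisym[OF a Gsub])
    moreover have "G \<approx> Cg" by (rule lepoll_antisym[OF b assms(2)])
    ultimately show ?thesis by blast
  next
    case 3
    have a: "F \<lesssim> G" by (rule lepoll_trans[OF 3(1) assms(2)])
    have b: "G \<lesssim> F" by (rule lepoll_trans[OF 3(2) assms(1)])
    have "Cf \<approx> F" by (rule lepoll_antisym[OF assms(1) lepoll_trans[OF a 3(2)]])
    moreover have "F \<approx> G" by (rule lepoll_antisym[OF a b])
    moreover have "G \<approx> Cg" by (rule lepoll_antisym[OF lepoll_trans[OF b 3(1)] assms(2)])
    ultimately show ?thesis by blast
  qed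
qed

context tx begin

lemma quot_pre_eqpoll:
  assumes f: "f \<in> T"
  shows "X // preimage_rel X \<alpha> f \<approx> clsof \<alpha> (f ` X)"
proof -
  have q: "X // preimage_rel X \<alpha> f = (\<lambda>x. preimage_rel X \<alpha> f `` {x}) ` X"
    unfolding quotient_def by auto
  have c: "clsof \<alpha> (f ` X) = (\<lambda>x. \<alpha> `` {f x}) ` X"
    unfolding clsof_def by auto
  have key: "preimage_rel X \<alpha> f `` {x} = preimage_rel X \<alpha> f `` {y} \<longleftrightarrow> \<alpha> `` {f x} = \<alpha> `` {f y}"
    if xy: "x \<in> X" "y \<in> X" for x y
  proof -
    have fx: "f x \<in> X" "f y \<in> X" using T_into[OF f] xy by auto
    have "\<alpha> `` {f x} = \<alpha> `` {f y} \<longleftrightarrow> (f x, f y) \<in> \<alpha>" using eq_equiv_class_iff[OF eq fx] .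
    moreover have "preimage_rel X \<alpha> f `` {x} = preimage_rel X \<alpha> f `` {y} \<longleftrightarrow> (f x, f y) \<in> \<alpha>"
    proof
      assume "preimage_rel X \<alpha> f `` {x} = preimage_rel X \<alpha> f `` {y}"
      moreover have "y \<in> preimage_rel X \<alpha> f `` {y}" using xy fx alpha_refl by (auto simp: preimage_rel_def)
      ultimately show "(f x, f y) \<in> \<alpha>" by (auto simp: preimage_rel_def)
    next
      assume a: "(f x, f y) \<in> \<alpha>"
      have "(f x, f z) \<in> \<alpha> \<longleftrightarrow> (f y, f z) \<in> \<alpha>" for z
        using a alpha_sym alpha_trans by metis
      then show "preimage_rel X \<alpha> f `` {x} = preimage_rel X \<alpha> f `` {y}"
        using xy by (auto simp: preimage_rel_def)
    qed
    ultimately show ?thesis by simp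
  qed
  show ?thesis unfolding q c by (rule same_kernel_eqpoll) (use key in auto)
qed

lemma cls_le: "clsof \<alpha> A \<lesssim> A"
  unfolding clsof_def by (rule image_lepoll)

lemma cls_mono: "A \<subseteq> B \<Longrightarrow> clsof \<alpha> A \<subseteq> clsof \<alpha> B"
  unfolding clsof_def by auto

lemma fact_le:
  assumes b: "b \<in> T" and k: "k \<in> T" and fb: "\<And>x. x \<in> X \<Longrightarrow> f x = b (k x)"
  shows "f ` X \<lesssim> clsof \<alpha> (k ` X)"
proof -
  have "clsof \<alpha> (k ` X) = (\<lambda>x. \<alpha> `` {k x}) ` X" unfolding clsof_def by auto
  moreover have "f ` X \<lesssim> (\<lambda>x. \<alpha> `` {k x}) ` X"
  proof (rule coarser_lepoll)
    fix x y assume xy: "x \<in> X" "y \<in> X" "\<alpha> `` {k x} = \<alpha> `` {k y}"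
    then have "(k x, k y) \<in> \<alpha>" using eq_equiv_class_iff[OF eq] T_into[OF k] by blast
    then show "f x = f y" using fb xy TD[OF b] by metis
  qed
  ultimately show ?thesis by simp
qed

lemma J_dest:
  assumes f: "f \<in> T" and g: "g \<in> T" and I: "in_ideal T m f g"
  shows "f = g \<or> (f ` X \<subseteq> g ` X \<and> clsof \<alpha> (f ` X) \<subseteq> clsof \<alpha> (g ` X)) \<or> f ` X \<lesssim> clsof \<alpha> (g ` X)"
proof -
  from I consider "f = g" | a where "a \<in> T" "f = m a g" | b where "b \<in> T" "f = m g b"
    | a b where "a \<in> T" "b \<in> T" "f = m (m a g) b"
    unfolding in_ideal_def by blast
  then show ?thesis
  proof cases
    case (2 a)
    then have "f ` X \<subseteq> g ` X" using img_mult by blast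
    then show ?thesis using cls_mono by blast
  next
    case (3 b)
    then have "f ` X \<lesssim> clsof \<alpha> (g ` X)" using fact_le[OF 3(1) g] by (simp add: mult_app)
    then show ?thesis by blast
  next
    case (4 a b)
    have k: "m a g \<in> T" using mult_T[OF 4(1) g] .
    have "f ` X \<lesssim> clsof \<alpha> ((m a g) ` X)" using fact_le[OF 4(2) k] 4(3) by (simp add: mult_app)
    moreover have "(m a g) ` X \<subseteq> g ` X" using img_mult 4(1) by blast
    ultimately have "f ` X \<lesssim> clsof \<alpha> (g ` X)"
      using lepoll_trans subset_imp_lepoll[OF cls_mono] by blast
    then show ?thesis by blast
  qed simp
qed

lemma J_constr:
  assumes f: "f \<in> T" and g: "g \<in> T" and c: "f ` X \<approx> clsof \<alpha> (g ` X)"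
  shows "in_ideal T m f g"
proof -
  define r where "r C = (SOME y. y \<in> C \<and> y \<in> g ` X)" for C
  have rC: "r C \<in> C \<and> r C \<in> g ` X" if Cin: "C \<in> clsof \<alpha> (g ` X)" for C
  proof -
    obtain a where a: "C = \<alpha> `` {a}" "a \<in> g ` X" using Cin unfolding clsof_def by (rule imageE)
    have "a \<in> C" using a alpha_refl T_img[OF g] by auto
    then have "\<exists>y. y \<in> C \<and> y \<in> g ` X" using a by blast
    then show ?thesis unfolding r_def by (rule someI_ex)
  qed
  have Cy: "C = \<alpha> `` {y}" if Cin: "C \<in> clsof \<alpha> (g ` X)" and yC: "y \<in> C" for C y
  proof -
    obtain a where a: "C = \<alpha> `` {a}" "a \<in> g ` X" using Cin unfolding clsof_def by (rule imageE)
    then have "(a, y) \<in> \<alpha>" using yC by auto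
    then show ?thesis using a equiv_class_eq[OF eq] by simp
  qed
  define R where "R = r ` clsof \<alpha> (g ` X)"
  have injr: "inj_on r (clsof \<alpha> (g ` X))"
    by (rule inj_onI) (metis Cy rC)
  have RX: "R \<subseteq> g ` X" using rC by (auto simp: R_def)
  have sepR: "separates \<alpha> R" unfolding separates_def
  proof (intro ballI impI)
    fix y1 y2 assume "y1 \<in> R" "y2 \<in> R" "(y1, y2) \<in> \<alpha>"
    then obtain C1 C2 where C: "C1 \<in> clsof \<alpha> (g ` X)" "C2 \<in> clsof \<alpha> (g ` X)" "y1 = r C1" "y2 = r C2"
      and a: "(y1,y2) \<in> \<alpha>" by (auto simp: R_def)
    have "C1 = \<alpha> `` {y1}" "C2 = \<alpha> `` {y2}" using Cy rC C by auto
    moreover have "\<alpha> `` {y1} = \<alpha> `` {y2}" using a equiv_class_eq[OF eq] by simp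
    ultimately show "y1 = y2" using C by simp
  qed
  have "R \<approx> clsof \<alpha> (g ` X)" unfolding R_def using injr by (rule inj_on_image_eqpoll_self)
  then have "f ` X \<approx> R" using eqpoll_trans[OF c eqpoll_sym] by blast
  then obtain \<psi> where \<psi>: "bij_betw \<psi> (f ` X) R" by (auto simp: eqpoll_def)
  define k where "k = restrict (\<lambda>x. \<psi> (f x)) X"
  have kin: "k x \<in> R" if "x \<in> X" for x using \<psi> that by (auto simp: k_def bij_betw_def)
  have kT: "k \<in> T" unfolding memT
  proof (intro conjI allI impI)
    show "k \<in> X \<rightarrow>\<^sub>E X" using kin RX T_img[OF g] by (auto simp: k_def)
    fix x y assume "(x,y) \<in> \<alpha>" then show "k x = k y"
      using alpha_sub TD[OF f] by (auto simp: k_def)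
  qed
  have kg: "k ` X \<subseteq> g ` X" using kin RX by auto
  obtain a where a: "a \<in> T" "k = m a g" using L_fact[OF kT g kg] by blast
  have "\<exists>b\<in>T. f = m k b"
  proof (rule R_fact[OF f kT])
    fix x y assume xy: "x \<in> X" "y \<in> X" "(k x, k y) \<in> \<alpha>"
    then have "k x = k y" using sepR kin by (auto simp: separates_def)
    then have "\<psi> (f x) = \<psi> (f y)" using xy by (simp add: k_def)
    then show "f x = f y" using \<psi> xy by (auto simp: bij_betw_def inj_on_def)
  qed
  then obtain b where "b \<in> T" "f = m (m a g) b" using a by blast
  then show ?thesis unfolding in_ideal_def using a by blast
qed

lemma J_iff:
  assumes f: "f \<in> T" and g: "g \<in> T"
  shows "greenJ T m f g \<longleftrightarrow>
    f ` X = g ` X \<or> (X // preimage_rel X \<alpha> f \<approx> f ` X \<and> f ` X \<approx> g ` X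
                            \<and> g ` X \<approx> X // preimage_rel X \<alpha> g)"
proof -
  have qf: "X // preimage_rel X \<alpha> f \<approx> f ` X \<longleftrightarrow> clsof \<alpha> (f ` X) \<approx> f ` X"
    using quot_pre_eqpoll[OF f] eqpoll_trans[OF eqpoll_sym] eqpoll_trans by blast
  have qg: "g ` X \<approx> X // preimage_rel X \<alpha> g \<longleftrightarrow> g ` X \<approx> clsof \<alpha> (g ` X)"
    using quot_pre_eqpoll[OF g] eqpoll_trans[OF _ eqpoll_sym] eqpoll_trans by blast
  have "greenJ T m f g \<longleftrightarrow>
    f ` X = g ` X \<or> (clsof \<alpha> (f ` X) \<approx> f ` X \<and> f ` X \<approx> g ` X \<and> g ` X \<approx> clsof \<alpha> (g ` X))"
  proof
    assume J: "greenJ T m f g"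
    show "f ` X = g ` X \<or> (clsof \<alpha> (f ` X) \<approx> f ` X \<and> f ` X \<approx> g ` X \<and> g ` X \<approx> clsof \<alpha> (g ` X))"
    proof (cases "f ` X = g ` X")
      case False
      then have ne: "f \<noteq> g" by auto
      have 1: "(f ` X \<subseteq> g ` X \<and> clsof \<alpha> (f ` X) \<subseteq> clsof \<alpha> (g ` X)) \<or> f ` X \<lesssim> clsof \<alpha> (g ` X)"
        using J_dest[OF f g] J ne by (auto simp: greenJ_def)
      have 2: "(g ` X \<subseteq> f ` X \<and> clsof \<alpha> (g ` X) \<subseteq> clsof \<alpha> (f ` X)) \<or> g ` X \<lesssim> clsof \<alpha> (f ` X)"
        using J_dest[OF g f] J ne by (auto simp: greenJ_def)
      have "clsof \<alpha> (f ` X) \<approx> f ` X \<and> f ` X \<approx> g ` X \<and> g ` X \<approx> clsof \<alpha> (g ` X)"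
        by (rule four_sets[OF cls_le cls_le 1 2]) (use False in blast)
      then show ?thesis by blast
    qed simp
  next
    assume H: "f ` X = g ` X \<or> (clsof \<alpha> (f ` X) \<approx> f ` X \<and> f ` X \<approx> g ` X \<and> g ` X \<approx> clsof \<alpha> (g ` X))"
    show "greenJ T m f g"
    proof (cases "f ` X = g ` X")
      case True
      then obtain s t where "s \<in> T" "f = m s g" "t \<in> T" "g = m t f"
        using L_fact[OF f g] L_fact[OF g f] by blast
      then show ?thesis using f g unfolding greenJ_def in_ideal_def by blast
    next
      case False
      then have h: "clsof \<alpha> (f ` X) \<approx> f ` X" "f ` X \<approx> g ` X" "g ` X \<approx> clsof \<alpha> (g ` X)" using H by auto
      have "f ` X \<approx> clsof \<alpha> (g ` X)" using h eqpoll_trans by blast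
      moreover have "g ` X \<approx> clsof \<alpha> (f ` X)" using h eqpoll_trans eqpoll_sym by blast
      ultimately show ?thesis using J_constr f g by (auto simp: greenJ_def)
    qed
  qed
  then show ?thesis using qf qg by simp
qed

end



lemma lepoll_finite': "A \<lesssim> B \<Longrightarrow> finite B \<Longrightarrow> finite A"
  by (meson finite_surj lepoll_iff)

context tx begin

lemma sep_cls: "f \<in> T \<Longrightarrow> separates \<alpha> (f ` X) \<Longrightarrow> clsof \<alpha> (f ` X) \<approx> f ` X"
  unfolding clsof_def
  by (rule inj_on_image_eqpoll_self, rule inj_onI)
     (metis T_img eq_equiv_class_iff[OF eq] separates_def subsetD)

lemma cls_sep:
  assumes f: "f \<in> T" and h: "finite (X // \<alpha>) \<or> \<alpha> = Id_on X" and c: "clsof \<alpha> (f ` X) \<approx> f ` X"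
  shows "separates \<alpha> (f ` X)"
  using h
proof
  assume "\<alpha> = Id_on X" then show ?thesis by (auto simp: separates_def)
next
  assume fin: "finite (X // \<alpha>)"
  have q: "X // \<alpha> = (\<lambda>x. \<alpha> `` {x}) ` X" unfolding quotient_def by auto
  have "f ` X \<lesssim> (\<lambda>x. \<alpha> `` {x}) ` X"
    by (rule coarser_lepoll) (metis eq_equiv_class_iff[OF eq] TD[OF f])
  then have finf: "finite (f ` X)" using fin q lepoll_finite' by metis
  then have "finite (clsof \<alpha> (f ` X))" by (simp add: clsof_def)
  then have "card (clsof \<alpha> (f ` X)) = card (f ` X)" using c finf eqpoll_iff_card by blast
  then have inj: "inj_on (\<lambda>a. \<alpha> `` {a}) (f ` X)" using inj_on_iff_eq_card[OF finf, of "\<lambda>a. \<alpha> `` {a}"] by (simp add: clsof_def)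
  show ?thesis unfolding separates_def
  proof (intro ballI impI)
    fix x y assume xy: "x \<in> f ` X" "y \<in> f ` X" "(x,y) \<in> \<alpha>"
    have e: "\<alpha> `` {x} = \<alpha> `` {y}" using equiv_class_eq[OF eq xy(3)] .
    show "x = y" by (rule inj_onD[OF inj]) (simp_all add: e xy(1,2))
  qed
qed

lemma DJ_good:
  assumes h: "finite (X // \<alpha>) \<or> \<alpha> = Id_on X" and f: "f \<in> T" and g: "g \<in> T"
  shows "greenD T m f g \<longleftrightarrow> greenJ T m f g"
proof -
  have sf: "separates \<alpha> (f ` X) \<longleftrightarrow> X // preimage_rel X \<alpha> f \<approx> f ` X"
    using sep_cls[OF f] cls_sep[OF f h] quot_pre_eqpoll[OF f] eqpoll_sym eqpoll_trans by metis
  have sg: "separates \<alpha> (g ` X) \<longleftrightarrow> g ` X \<approx> X // preimage_rel X \<alpha> g"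
    using sep_cls[OF g] cls_sep[OF g h] quot_pre_eqpoll[OF g] eqpoll_sym eqpoll_trans by metis
  show ?thesis unfolding D_iff[OF f g] J_iff[OF f g] sf sg by blast
qed

lemma DJ_bad:
  assumes inf: "infinite (X // \<alpha>)" and nid: "\<alpha> \<noteq> Id_on X"
  shows "\<exists>f\<in>T. \<exists>g\<in>T. \<not> (greenD T m f g \<longleftrightarrow> greenJ T m f g)"
proof -
  have "Id_on X \<subseteq> \<alpha>" using alpha_refl by auto
  then have "\<not> \<alpha> \<subseteq> Id_on X" using nid by blast
  then obtain c1 c2 where c0: "(c1,c2) \<in> \<alpha>" "(c1,c2) \<notin> Id_on X" by auto
  then have c: "(c1,c2) \<in> \<alpha>" "c1 \<noteq> c2" using alpha_sub by auto
  have cX: "c1 \<in> X" "c2 \<in> X" using c alpha_sub by auto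
  define r where "r C = (if C = \<alpha> `` {c1} then c1 else (SOME y. y \<in> C))" for C
  have rC: "r C \<in> C" if Cin: "C \<in> X // \<alpha>" for C
  proof -
    obtain x where x: "x \<in> X" "C = \<alpha> `` {x}" using Cin by (auto elim: quotientE)
    then have "x \<in> C" using alpha_refl by auto
    then show ?thesis unfolding r_def using cX alpha_refl by (auto intro: someI)
  qed
  have Cr: "C = \<alpha> `` {y}" if Cin: "C \<in> X // \<alpha>" and yC: "y \<in> C" for C y
  proof -
    obtain x where x: "x \<in> X" "C = \<alpha> `` {x}" using Cin by (auto elim: quotientE)
    then have "(x, y) \<in> \<alpha>" using yC by auto
    then show ?thesis using x equiv_class_eq[OF eq] by simp
  qed
  define R where "R = r ` (X // \<alpha>)"
  have injr: "inj_on r (X // \<alpha>)" by (rule inj_onI) (metis Cr rC)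
  have RQ: "R \<approx> X // \<alpha>" unfolding R_def using injr by (rule inj_on_image_eqpoll_self)
  have RX: "R \<subseteq> X"
  proof
    fix z assume "z \<in> R"
    then obtain C where C: "C \<in> X // \<alpha>" "z = r C" by (auto simp: R_def)
    then have zC: "z \<in> C" using rC by simp
    obtain x where "C = \<alpha> `` {x}" using C(1) by (auto elim: quotientE)
    then show "z \<in> X" using zC alpha_sub by auto
  qed
  have c1Q: "\<alpha> `` {c1} \<in> X // \<alpha>" using cX(1) by (rule quotientI)
  have c1R: "c1 \<in> R" unfolding R_def using c1Q by (force simp: r_def)
  have c2R: "c2 \<notin> R"
  proof
    assume "c2 \<in> R"
    then obtain C where C: "C \<in> X // \<alpha>" "c2 = r C" by (auto simp: R_def)
    then have "C = \<alpha> `` {c2}" using Cr rC by metis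
    also have "\<dots> = \<alpha> `` {c1}" using c equiv_class_eq[OF eq] alpha_sym by metis
    finally have "r C = c1" by (simp add: r_def)
    then show False using C c by simp
  qed
  have infR: "infinite R" using RQ inf eqpoll_finite_iff by blast
  have R'R: "insert c2 R \<approx> R" using infR by (rule infinite_insert_eqpoll)
  have Qins: "X // \<alpha> \<approx> insert c2 R" using RQ R'R eqpoll_sym eqpoll_trans by blast
  then obtain \<beta> where \<beta>: "bij_betw \<beta> (X // \<alpha>) (insert c2 R)" by (auto simp: eqpoll_def)
  have q: "X // \<alpha> = (\<lambda>x. \<alpha> `` {x}) ` X" unfolding quotient_def by auto
  define g where "g = restrict (\<lambda>x. r (\<alpha> `` {x})) X"
  define f where "f = restrict (\<lambda>x. \<beta> (\<alpha> `` {x})) X"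
  have cong: "\<alpha> `` {x} = \<alpha> `` {y}" if "(x,y) \<in> \<alpha>" for x y
    using that equiv_class_eq[OF eq] by simp
  have gimg: "g ` X = R" unfolding g_def R_def q by auto
  have fimg: "f ` X = insert c2 R"
  proof -
    have "f ` X = \<beta> ` (X // \<alpha>)" unfolding f_def q by auto
    then show ?thesis using \<beta> by (simp add: bij_betw_def)
  qed
  have gT: "g \<in> T" unfolding memT
  proof (intro conjI allI impI)
    show "g \<in> X \<rightarrow>\<^sub>E X" using gimg RX by (auto simp: g_def)
    fix x y assume "(x,y) \<in> \<alpha>" then show "g x = g y" using cong alpha_sub by (auto simp: g_def)
  qed
  have fT: "f \<in> T" unfolding memT
  proof (intro conjI allI impI)
    show "f \<in> X \<rightarrow>\<^sub>E X" using fimg RX cX by (auto simp: f_def)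
    fix x y assume "(x,y) \<in> \<alpha>" then show "f x = f y" using cong alpha_sub by (auto simp: f_def)
  qed
  have clsR: "clsof \<alpha> R = X // \<alpha>"
  proof
    show "clsof \<alpha> R \<subseteq> X // \<alpha>" using RX by (auto simp: clsof_def intro: quotientI)
    show "X // \<alpha> \<subseteq> clsof \<alpha> R"
    proof
      fix C assume "C \<in> X // \<alpha>"
      then have "C = \<alpha> `` {r C}" "r C \<in> R" using Cr rC by (auto simp: R_def)
      then show "C \<in> clsof \<alpha> R" by (auto simp: clsof_def)
    qed
  qed
  have clsR': "clsof \<alpha> (insert c2 R) = X // \<alpha>"
  proof -
    have "\<alpha> `` {c2} = \<alpha> `` {c1}" using c cong alpha_sym by metis
    then have "clsof \<alpha> (insert c2 R) = clsof \<alpha> R" using c1R by (auto simp: clsof_def)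
    then show ?thesis using clsR by simp
  qed
  have nD: "\<not> greenD T m f g"
  proof
    assume "greenD T m f g"
    then have "f ` X = g ` X \<or> separates \<alpha> (f ` X)" using D_iff[OF fT gT] by blast
    moreover have "f ` X \<noteq> g ` X" using fimg gimg c2R by auto
    moreover have "\<not> separates \<alpha> (f ` X)"
    proof
      assume s: "separates \<alpha> (f ` X)"
      have c12: "c1 \<in> f ` X" "c2 \<in> f ` X" using fimg c1R by auto
      show False using s[unfolded separates_def, rule_format, OF c12 c(1)] c(2) by simp
    qed
    ultimately show False by blast
  qed
  have J: "greenJ T m f g"
  proof -
    have "clsof \<alpha> (f ` X) \<approx> f ` X" using Qins by (simp add: fimg clsR')
    then have a: "X // preimage_rel X \<alpha> f \<approx> f ` X"
      by (rule eqpoll_trans[OF quot_pre_eqpoll[OF fT]])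
    have b: "f ` X \<approx> g ` X" using fimg gimg R'R by simp
    have "g ` X \<approx> clsof \<alpha> (g ` X)" using RQ by (simp add: gimg clsR)
    then have d: "g ` X \<approx> X // preimage_rel X \<alpha> g"
      by (rule eqpoll_trans[OF _ eqpoll_sym[OF quot_pre_eqpoll[OF gT]]])
    show ?thesis using J_iff[OF fT gT] a b d by blast
  qed
  show ?thesis using nD J fT gT by blast
qed

end


theorem theorem5p6:
  fixes X :: "'a set" and \<alpha> :: "('a \<times> 'a) set"
  assumes "X \<noteq> {}" and "equiv X \<alpha>"
  shows "(\<forall>f\<in>TXalpha X \<alpha>. \<forall>g\<in>TXalpha X \<alpha>.
      (greenL (TXalpha X \<alpha>) (tmult X) f g \<longleftrightarrow> f ` X = g ` X)
    \<and> (greenR (TXalpha X \<alpha>) (tmult X) f g \<longleftrightarrow>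
         f = g \<or> (kernel X f = kernel X g \<and> separates \<alpha> (f ` X) \<and> separates \<alpha> (g ` X)))
    \<and> (greenH (TXalpha X \<alpha>) (tmult X) f g \<longleftrightarrow>
         f = g \<or> (kernel X f = kernel X g \<and> f ` X = g ` X \<and> separates \<alpha> (f ` X)))
    \<and> (greenD (TXalpha X \<alpha>) (tmult X) f g \<longleftrightarrow>
         f ` X = g ` X \<or> (f ` X \<approx> g ` X \<and> separates \<alpha> (f ` X) \<and> separates \<alpha> (g ` X)))
    \<and> (greenJ (TXalpha X \<alpha>) (tmult X) f g \<longleftrightarrow>
         f ` X = g ` X \<or> (X // preimage_rel X \<alpha> f \<approx> f ` X \<and> f ` X \<approx> g ` X
                            \<and> g ` X \<approx> X // preimage_rel X \<alpha> g)))
  \<and> ((\<forall>f\<in>TXalpha X \<alpha>. \<forall>g\<in>TXalpha X \<alpha>.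
        greenD (TXalpha X \<alpha>) (tmult X) f g \<longleftrightarrow> greenJ (TXalpha X \<alpha>) (tmult X) f g)
     \<longleftrightarrow> (finite (X // \<alpha>) \<or> \<alpha> = Id_on X))"
proof -
  interpret tx X \<alpha> using assms by unfold_locales
  have part1: "\<forall>f\<in>TXalpha X \<alpha>. \<forall>g\<in>TXalpha X \<alpha>.
      (greenL (TXalpha X \<alpha>) (tmult X) f g \<longleftrightarrow> f ` X = g ` X)
    \<and> (greenR (TXalpha X \<alpha>) (tmult X) f g \<longleftrightarrow>
         f = g \<or> (kernel X f = kernel X g \<and> separates \<alpha> (f ` X) \<and> separates \<alpha> (g ` X)))
    \<and> (greenH (TXalpha X \<alpha>) (tmult X) f g \<longleftrightarrow>
         f = g \<or> (kernel X f = kernel X g \<and> f ` X = g ` X \<and> separates \<alpha> (f ` X)))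
    \<and> (greenD (TXalpha X \<alpha>) (tmult X) f g \<longleftrightarrow>
         f ` X = g ` X \<or> (f ` X \<approx> g ` X \<and> separates \<alpha> (f ` X) \<and> separates \<alpha> (g ` X)))
    \<and> (greenJ (TXalpha X \<alpha>) (tmult X) f g \<longleftrightarrow>
         f ` X = g ` X \<or> (X // preimage_rel X \<alpha> f \<approx> f ` X \<and> f ` X \<approx> g ` X
                            \<and> g ` X \<approx> X // preimage_rel X \<alpha> g))"
  proof (intro ballI conjI)
    fix f g assume f: "f \<in> TXalpha X \<alpha>" and g: "g \<in> TXalpha X \<alpha>"
    show "greenL (TXalpha X \<alpha>) (tmult X) f g \<longleftrightarrow> f ` X = g ` X" by (rule L_iff[OF f g])
    show "greenR (TXalpha X \<alpha>) (tmult X) f g \<longleftrightarrow>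
         f = g \<or> (kernel X f = kernel X g \<and> separates \<alpha> (f ` X) \<and> separates \<alpha> (g ` X))"
      by (rule R_iff[OF f g])
    show "greenH (TXalpha X \<alpha>) (tmult X) f g \<longleftrightarrow>
         f = g \<or> (kernel X f = kernel X g \<and> f ` X = g ` X \<and> separates \<alpha> (f ` X))"
      by (rule H_iff[OF f g])
    show "greenD (TXalpha X \<alpha>) (tmult X) f g \<longleftrightarrow>
         f ` X = g ` X \<or> (f ` X \<approx> g ` X \<and> separates \<alpha> (f ` X) \<and> separates \<alpha> (g ` X))"
      by (rule D_iff[OF f g])
    show "greenJ (TXalpha X \<alpha>) (tmult X) f g \<longleftrightarrow>
         f ` X = g ` X \<or> (X // preimage_rel X \<alpha> f \<approx> f ` X \<and> f ` X \<approx> g ` X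
                            \<and> g ` X \<approx> X // preimage_rel X \<alpha> g)"
      by (rule J_iff[OF f g])
  qed
  have part2: "(\<forall>f\<in>TXalpha X \<alpha>. \<forall>g\<in>TXalpha X \<alpha>.
        greenD (TXalpha X \<alpha>) (tmult X) f g \<longleftrightarrow> greenJ (TXalpha X \<alpha>) (tmult X) f g)
     \<longleftrightarrow> (finite (X // \<alpha>) \<or> \<alpha> = Id_on X)"
  proof
    assume H: "\<forall>f\<in>TXalpha X \<alpha>. \<forall>g\<in>TXalpha X \<alpha>.
        greenD (TXalpha X \<alpha>) (tmult X) f g \<longleftrightarrow> greenJ (TXalpha X \<alpha>) (tmult X) f g"
    show "finite (X // \<alpha>) \<or> \<alpha> = Id_on X"
    proof (rule ccontr)
      assume "\<not> (finite (X // \<alpha>) \<or> \<alpha> = Id_on X)"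
      then have "infinite (X // \<alpha>)" "\<alpha> \<noteq> Id_on X" by auto
      from DJ_bad[OF this] H show False by blast
    qed
  next
    assume "finite (X // \<alpha>) \<or> \<alpha> = Id_on X"
    then show "\<forall>f\<in>TXalpha X \<alpha>. \<forall>g\<in>TXalpha X \<alpha>.
        greenD (TXalpha X \<alpha>) (tmult X) f g \<longleftrightarrow> greenJ (TXalpha X \<alpha>) (tmult X) f g"
      using DJ_good by blast
  qed
  show ?thesis using part1 part2 by blast
qed

end
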